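(* Let $J=[0,+\infty)$ and let $A\colon J\to\mathcal{L}(\mathbb{R}^n)$ be of locally bounded variation on $J$ such that $I-\Delta^{-}A(t)$ is invertible for all $t\in(0,+\infty)$ and $I+\Delta^{+}A(t)$ is invertible for all $t\in J$. Let $U$ be the transition matrix of $\frac{dx}{d\tau}=D[A(t)x]$. Then the trivial solution of this equation is uniformly asymptotically stable if and only if there exist constants $\alpha,K>0$ such that $\|U(t,s_0)\|\le Ke^{-\alpha(t-s_0)}$ for all $t\ge s_0\ge 0$.
   Context: Here $\Delta^{+}A(t)=A(t^+)-A(t)$, $\Delta^{-}A(t)=A(t)-A(t^-)$. Integrals $\int_a^b \mathrm{d}[A(s)]x(s)$ are Perron–Stieltjes (Kurzweil–Stieltjes) integrals. A solution of $\frac{dx}{d\tau}=D[A(t)x]$ is a function $x$ with $x(b)-x(a)=\int_a^b\mathrm{d}[A(s)]x(s)$ for all $a,b$ in its interval of definition. The transition matrix $U\colon J\times J\to\mathcal{L}(\mathbb{R}^n)$ is the unique matrix function with $U(t,s)=I+\int_s^t\mathrm{d}[A(r)]U(r,s)$; the unique solution with $x(s_0)=x_0$ is $x(t,s_0,x_0)=U(t,s_0)x_0$ for $t\ge s_0$. The trivial solution is uniformly stable if for every $\varepsilon>0$ there is $\delta=\delta(\varepsilon)>0$ such that for all $s_0\ge0$, $\|x_0\|<\delta$ implies $\|x(t,s_0,x_0)\|<\varepsilon$ for all $t\ge s_0$. It is uniformly asymptotically stable if it is uniformly stable and there exists $\delta_0>0$ such that for each $\varepsilon>0$ there is $T=T(\varepsilon)\ge0$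 such that for all $s_0\ge0$ and $x_0$ with $\|x_0\|<\delta_0$, $\|x(t,s_0,x_0)\|<\varepsilon$ for all $t\ge s_0+T(\varepsilon)$. *)

theory Defs
  imports "HOL-Analysis.Analysis"
begin

type_synonym 'n mat = "real^'n^'n"

definition opnorm :: "'n::finite mat \<Rightarrow> real" where
  "opnorm M = onorm (\<lambda>x. M *v x)"

definition bv_on :: "(real \<Rightarrow> 'n::finite mat) \<Rightarrow> real \<Rightarrow> real \<Rightarrow> bool" where
  "bv_on A a b \<longleftrightarrow>
     bdd_above {(\<Sum>K\<in>D. opnorm (A (Sup K) - A (Inf K))) | D. D division_of {a..b}}"

definition locally_bv_J :: "(real \<Rightarrow> 'n::finite mat) \<Rightarrow> bool" where
  "locally_bv_J A \<longleftrightarrow> (\<forall>b\<ge>0. bv_on A 0 b)"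

definition jump_plus :: "(real \<Rightarrow> 'n::finite mat) \<Rightarrow> real \<Rightarrow> 'n mat" where
  "jump_plus A t = Lim (at_right t) A - A t"

definition jump_minus :: "(real \<Rightarrow> 'n::finite mat) \<Rightarrow> real \<Rightarrow> 'n mat" where
  "jump_minus A t = A t - Lim (at_left t) A"

text \<open>Kurzweil--Stieltjes integral over [a,b] (a \<le> b) of the matrix function F
  against the matrix function A:  \<integral>_a^b d[A(s)] F(s) = I.\<close>
definition ks_has_integral ::
  "(real \<Rightarrow> 'n::finite mat) \<Rightarrow> (real \<Rightarrow> 'n mat) \<Rightarrow> 'n mat \<Rightarrow> real \<Rightarrow> real \<Rightarrow> bool" where
  "ks_has_integral A F I a b \<longleftrightarrow> a \<le> b \<and>
     (\<forall>e>0. \<exists>\<gamma>. gauge \<gamma> \<and>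
        (\<forall>D. D tagged_division_of {a..b} \<and> \<gamma> fine D \<longrightarrow>
            norm ((\<Sum>(\<tau>,K)\<in>D. (A (Sup K) - A (Inf K)) ** F \<tau>) - I) < e))"

definition ks_has_integral_or ::
  "(real \<Rightarrow> 'n::finite mat) \<Rightarrow> (real \<Rightarrow> 'n mat) \<Rightarrow> 'n mat \<Rightarrow> real \<Rightarrow> real \<Rightarrow> bool" where
  "ks_has_integral_or A F I a b \<longleftrightarrow>
     (if a \<le> b then ks_has_integral A F I a b else ks_has_integral A F (- I) b a)"

definition transition_matrix :: "(real \<Rightarrow> 'n::finite mat) \<Rightarrow> (real \<Rightarrow> real \<Rightarrow> 'n mat) \<Rightarrow> bool" where
  "transition_matrix A U \<longleftrightarrow>
     (\<forall>t\<ge>0. \<forall>s\<ge>0. ks_has_integral_or A (\<lambda>r. U r s) (U t s - mat 1) s t)"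

text \<open>Stability notions for the trivial solution, where the solution through (s0,x0)
  is x(t,s0,x0) = U(t,s0) x0 for t \<ge> s0.\<close>
definition uniformly_stable :: "(real \<Rightarrow> real \<Rightarrow> 'n::finite mat) \<Rightarrow> bool" where
  "uniformly_stable U \<longleftrightarrow>
     (\<forall>\<epsilon>>0. \<exists>\<delta>>0. \<forall>s0\<ge>0. \<forall>x0. norm x0 < \<delta> \<longrightarrow>
        (\<forall>t\<ge>s0. norm (U t s0 *v x0) < \<epsilon>))"

definition uniformly_asymptotically_stable :: "(real \<Rightarrow> real \<Rightarrow> 'n::finite mat) \<Rightarrow> bool" where
  "uniformly_asymptotically_stable U \<longleftrightarrow> uniformly_stable U \<and>
     (\<exists>\<delta>0>0. \<forall>\<epsilon>>0. \<exists>T\<ge>0. \<forall>s0\<ge>0. \<forall>x0. norm x0 < \<delta>0 \<longrightarrow>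
        (\<forall>t\<ge>s0 + T. norm (U t s0 *v x0) < \<epsilon>))"

end

theory Submission
  imports Defs
begin

definition RS :: "(real \<Rightarrow> 'n::finite mat) \<Rightarrow> (real \<Rightarrow> real^'n) \<Rightarrow> (real \<times> real set) set \<Rightarrow> real^'n" where
  "RS A y D = (\<Sum>(\<tau>,K)\<in>D. (A (Sup K) - A (Inf K)) *v y \<tau>)"

definition ksv :: "(real \<Rightarrow> 'n::finite mat) \<Rightarrow> (real \<Rightarrow> real^'n) \<Rightarrow> real^'n \<Rightarrow> real \<Rightarrow> real \<Rightarrow> bool" where
  "ksv A y I a b \<longleftrightarrow> a \<le> b \<and>
     (\<forall>e>0. \<exists>\<gamma>. gauge \<gamma> \<and> (\<forall>D. D tagged_division_of {a..b} \<and> \<gamma> fine D \<longrightarrow> norm (RS A y D - I) < e))"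

lemma tagged_piece_interval:
  assumes "D tagged_division_of {a..b::real}" "(\<tau>,K) \<in> D"
  obtains u v where "K = {u..v}" "u \<le> \<tau>" "\<tau> \<le> v" "a \<le> u" "v \<le> b"
proof -
  obtain u v where K: "K = cbox u v" using tagged_division_ofD(4)[OF assms] by blast
  have "\<tau> \<in> K" "K \<subseteq> {a..b}" using tagged_division_ofD(2,3)[OF assms] by auto
  then show ?thesis using that[of u v] K by auto
qed

lemma RS_Un:
  assumes p1: "p1 tagged_division_of {a..c::real}" and p2: "p2 tagged_division_of {c..b}"
    and "a \<le> c" "c \<le> b"
  shows "(p1 \<union> p2) tagged_division_of {a..b}" "RS A y (p1 \<union> p2) = RS A y p1 + RS A y p2"
proof -
  have "interior {a..c} \<inter> interior {c..b} = {}" by auto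
  moreover have "{a..c} \<union> {c..b} = {a..b}" using assms(3,4) by auto
  ultimately show "(p1 \<union> p2) tagged_division_of {a..b}"
    using tagged_division_Un[OF p1 p2] by metis
  show "RS A y (p1 \<union> p2) = RS A y p1 + RS A y p2"
    unfolding RS_def
  proof (rule sum.union_inter_neutral)
    show "finite p1" "finite p2" using p1 p2 by auto
    show "\<forall>x\<in>p1 \<inter> p2. (case x of (\<tau>, K) \<Rightarrow> (A (Sup K) - A (Inf K)) *v y \<tau>) = 0"
    proof
      fix x assume x: "x \<in> p1 \<inter> p2"
      obtain \<tau> K where xe: "x = (\<tau>,K)" by force
      obtain u v where 1: "K = {u..v}" "u \<le> \<tau>" "\<tau> \<le> v" "a \<le> u" "v \<le> c"
        using tagged_piece_interval[OF p1] x xe by blast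
      obtain u' v' where 2: "K = {u'..v'}" "u' \<le> \<tau>" "\<tau> \<le> v'" "c \<le> u'" "v' \<le> b"
        using tagged_piece_interval[OF p2] x xe by blast
      have "u = v" using 1 2 by (metis atLeastAtMost_iff dual_order.trans nle_le)
      then show "(case x of (\<tau>, K) \<Rightarrow> (A (Sup K) - A (Inf K)) *v y \<tau>) = 0"
        using xe 1 by simp
    qed
  qed
qed

lemma RS_single: "RS A y {(\<tau>, K)} = (A (Sup K) - A (Inf K)) *v y \<tau>"
  by (simp add: RS_def)

lemma ksvD:
  assumes "ksv A y I a b" "e > 0"
  obtains \<gamma> where "gauge \<gamma>" "\<And>D. D tagged_division_of {a..b} \<Longrightarrow> \<gamma> fine D \<Longrightarrow> norm (RS A y D - I) < e"
proof -
  have "\<forall>e>0. \<exists>\<gamma>. gauge \<gamma> \<and> (\<forall>D. D tagged_division_of {a..b} \<and> \<gamma> fine D \<longrightarrow> norm (RS A y D - I) < e)"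
    using assms(1) unfolding ksv_def by (rule conjunct2)
  then have "\<exists>\<gamma>. gauge \<gamma> \<and> (\<forall>D. D tagged_division_of {a..b} \<and> \<gamma> fine D \<longrightarrow> norm (RS A y D - I) < e)"
    using assms(2) by (elim allE impE) 
  then obtain \<gamma> where g: "gauge \<gamma>" and h: "\<forall>D. D tagged_division_of {a..b} \<and> \<gamma> fine D \<longrightarrow> norm (RS A y D - I) < e"
    by (elim exE conjE)
  show ?thesis
  proof (rule that[OF g])
    fix D assume "D tagged_division_of {a..b}" "\<gamma> fine D"
    then show "norm (RS A y D - I) < e" using h by (elim allE impE) (rule conjI)
  qed
qed

lemma ksv_degenerate: assumes "ksv A y I a a" shows "I = 0"
proof (rule ccontr)
  assume "I \<noteq> 0"
  then have "norm I > 0" by simp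
  then obtain \<gamma> where g: "gauge \<gamma>" and h: "\<And>D. D tagged_division_of {a..a} \<Longrightarrow> \<gamma> fine D \<Longrightarrow> norm (RS A y D - I) < norm I"
    using ksvD[OF assms \<open>norm I > 0\<close>] by blast
  obtain D where D: "D tagged_division_of {a..a}" "\<gamma> fine D" using fine_division_exists_real[OF g] by blast
  have "RS A y D = 0" unfolding RS_def
  proof (rule sum.neutral, safe)
    fix \<tau> K assume "(\<tau>,K) \<in> D"
    then obtain u v where uv: "K = {u..v}" "u \<le> \<tau>" "\<tau> \<le> v" "a \<le> u" "v \<le> a"
      by (rule tagged_piece_interval[OF D(1)])
    then have "K = {a}" by simp
    then show "(A (Sup K) - A (Inf K)) *v y \<tau> = 0" by simp
  qed
  then show False using h[OF D] by simp
qed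


lemma opnorm_nonneg: "opnorm (M::'n::finite mat) \<ge> 0"
  unfolding opnorm_def by (rule onorm_pos_le) simp

lemma opnorm_mv: "norm (M *v x) \<le> opnorm (M::'n::finite mat) * norm x"
  unfolding opnorm_def by (rule onorm) simp

lemma opnorm_mult: "opnorm ((M::'n::finite mat) ** N) \<le> opnorm M * opnorm N"
proof -
  have "(\<lambda>x. (M ** N) *v x) = (\<lambda>x. M *v x) \<circ> (\<lambda>x. N *v x)"
    by (auto simp: matrix_vector_mul_assoc)
  then show ?thesis unfolding opnorm_def
    by (metis onorm_compose matrix_vector_mul_bounded_linear)
qed

lemma opnorm_le_norm: "opnorm (M::'n::finite mat) \<le> real CARD('n) * real CARD('n) * norm M"
  unfolding opnorm_def
proof (rule onorm_le_matrix_component)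
  fix i j
  have "\<bar>M $ i $ j\<bar> \<le> norm (M $ i)" by (rule component_le_norm_cart)
  also have "\<dots> \<le> norm M" by (metis Finite_Cartesian_Product.norm_nth_le)
  finally show "\<bar>M $ i $ j\<bar> \<le> norm M" .
qed

lemma norm_le_opnorm: "norm (M::'n::finite mat) \<le> real CARD('n) * real CARD('n) * opnorm M"
proof -
  have "norm M \<le> (\<Sum>i\<in>UNIV. norm (M $ i))" unfolding norm_vec_def by (rule L2_set_le_sum) simp
  also have "\<dots> \<le> (\<Sum>i\<in>(UNIV::'n set). \<Sum>j\<in>(UNIV::'n set). \<bar>M $ i $ j\<bar>)"
    by (rule sum_mono) (simp add: norm_le_l1_cart)
  also have "\<dots> \<le> (\<Sum>i\<in>(UNIV::'n set). \<Sum>j\<in>(UNIV::'n set). opnorm M)"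
    by (intro sum_mono) (simp add: opnorm_def matrix_component_le_onorm)
  also have "\<dots> = real CARD('n) * real CARD('n) * opnorm M" by simp
  finally show ?thesis .
qed

definition varf :: "(real \<Rightarrow> 'n::finite mat) \<Rightarrow> real set \<Rightarrow> real" where
  "varf A K = opnorm (A (Sup K) - A (Inf K))"

definition W :: "(real \<Rightarrow> 'n::finite mat) \<Rightarrow> real \<Rightarrow> real" where
  "W A t = Sup {(\<Sum>K\<in>D. varf A K) | D. D division_of {0..t}}"

lemma division_piece_interval:
  assumes "D division_of {a..b::real}" "K \<in> D"
  obtains u v where "K = {u..v}" "u \<le> v" "a \<le> u" "v \<le> b"
proof -
  obtain u v where K: "K = cbox u v" "K \<noteq> {}" "K \<subseteq> {a..b}"
    using division_ofD(2,3,4)[OF assms(1) assms(2)] by metis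
  then show ?thesis using that[of u v] by auto
qed

lemma var_split:
  assumes bv: "locally_bv_J A" and "0 \<le> v" "v \<le> s" and D: "D division_of {v..s}"
  shows "(\<Sum>K\<in>D. varf A K) \<le> W A s - W A v"
proof -
  let ?S = "\<lambda>t. {(\<Sum>K\<in>D. varf A K) | D. D division_of {0..t}}"
  have bdd: "bdd_above (?S s)" using bv assms(2,3) unfolding locally_bv_J_def bv_on_def varf_def
    by auto
  have ne: "?S v \<noteq> {}" using division_of_self[of 0 v] assms(2) by auto
  have "x \<le> W A s - (\<Sum>K\<in>D. varf A K)" if "x \<in> ?S v" for x
  proof -
    obtain D1 where D1: "D1 division_of {0..v}" "x = (\<Sum>K\<in>D1. varf A K)" using \<open>x \<in> ?S v\<close> by blast
    have "interior {0..v} \<inter> interior {v..s} = {}" by auto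
    moreover have "{0..v} \<union> {v..s} = {0..s}" using assms by auto
    ultimately have U: "(D1 \<union> D) division_of {0..s}"
      using division_disjoint_union[OF D1(1) D] by metis
    have "(\<Sum>K\<in>D1 \<union> D. varf A K) = (\<Sum>K\<in>D1. varf A K) + (\<Sum>K\<in>D. varf A K)"
    proof (rule sum.union_inter_neutral)
      show "finite D1" "finite D" using D1 D by auto
      show "\<forall>K\<in>D1 \<inter> D. varf A K = 0"
      proof
        fix K assume K: "K \<in> D1 \<inter> D"
        obtain u w where 1: "K = {u..w}" "u \<le> w" "0 \<le> u" "w \<le> v"
          using division_piece_interval[OF D1(1)] K by blast
        obtain u' w' where 2: "K = {u'..w'}" "u' \<le> w'" "v \<le> u'" "w' \<le> s"
          using division_piece_interval[OF D] K by blast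
        have "u = w" using 1 2 by (metis atLeastAtMost_iff dual_order.trans nle_le)
        then show "varf A K = 0" using 1 by (simp add: varf_def opnorm_def onorm_zero)
      qed
    qed
    moreover have "(\<Sum>K\<in>D1 \<union> D. varf A K) \<le> W A s"
      unfolding W_def by (rule cSup_upper[OF _ bdd]) (use U in blast)
    ultimately show ?thesis using D1 by simp
  qed
  then have "W A v \<le> W A s - (\<Sum>K\<in>D. varf A K)"
    unfolding W_def[of A v] by (intro cSup_least[OF ne]) blast
  then show ?thesis by simp
qed

lemma varf_interval: "u \<le> v \<Longrightarrow> varf A {u..v} = opnorm (A v - A u)"
  by (simp add: varf_def)

lemma W_mono_diff:
  assumes bv: "locally_bv_J A" and "0 \<le> v" "v \<le> s"
  shows "opnorm (A s - A v) \<le> W A s - W A v"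
proof -
  have "{{v..s}} division_of {v..s}" using division_of_self[of v s] assms by auto
  from var_split[OF assms this] show ?thesis using assms by (simp add: varf_interval)
qed

lemma W_mono:
  assumes bv: "locally_bv_J A" and "0 \<le> v" "v \<le> s"
  shows "W A v \<le> W A s"
  using W_mono_diff[OF assms] opnorm_nonneg[of "A s - A v"] by linarith

lemma RS_bound:
  assumes bv: "locally_bv_J A" and "0 \<le> v" "v \<le> s" and D: "D tagged_division_of {v..s}"
    and B: "\<And>t. v \<le> t \<Longrightarrow> t \<le> s \<Longrightarrow> norm (y t) \<le> B"
  shows "norm (RS A y D) \<le> B * (W A s - W A v)"
proof -
  have B0: "0 \<le> B" using B[of v] assms(3) by (meson norm_ge_zero order_trans order_refl)
  have "norm (RS A y D) \<le> (\<Sum>(\<tau>,K)\<in>D. norm ((A (Sup K) - A (Inf K)) *v y \<tau>))"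
    unfolding RS_def by (rule norm_sum[THEN order_trans]) (simp add: case_prod_unfold)
  also have "\<dots> \<le> (\<Sum>(\<tau>,K)\<in>D. B * varf A K)"
  proof (rule sum_mono, safe)
    fix \<tau> K assume "(\<tau>,K) \<in> D"
    then obtain u w where "K = {u..w}" "u \<le> \<tau>" "\<tau> \<le> w" "v \<le> u" "w \<le> s"
      using tagged_piece_interval[OF D] by blast
    then have "norm (y \<tau>) \<le> B" using B by auto
    then show "norm ((A (Sup K) - A (Inf K)) *v y \<tau>) \<le> B * varf A K"
      unfolding varf_def
      by (metis mult.commute mult_left_mono opnorm_mv opnorm_nonneg order_trans)
  qed
  also have "\<dots> = B * (\<Sum>(\<tau>,K)\<in>D. (if K = {} then 0 else varf A K))"
    unfolding sum_distrib_left
    by (rule sum.cong) (use D in auto)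
  also have "(\<Sum>(\<tau>,K)\<in>D. (if K = {} then 0 else varf A K)) = (\<Sum>K\<in>snd ` D. (if K = {} then 0 else varf A K))"
    by (rule sum.over_tagged_division_lemma[OF D])
       (auto simp: varf_def opnorm_def onorm_zero)
  also have "\<dots> = (\<Sum>K\<in>snd ` D. varf A K)"
    by (rule sum.cong) (use division_of_tagged_division[OF D] in auto)
  also have "\<dots> \<le> W A s - W A v"
    by (rule var_split[OF bv assms(2,3) division_of_tagged_division[OF D]])
  finally show ?thesis using B0 by (simp add: mult_left_mono)
qed


lemma norm3: "x = a - b - c \<Longrightarrow> norm x \<le> norm a + norm b + norm (c::'a::real_normed_vector)"
proof -
  assume x: "x = a - b - c"
  have "norm (a - b - c) \<le> norm (a - b) + norm c" by (rule norm_triangle_ineq4)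
  also have "norm (a - b) \<le> norm a + norm b" by (rule norm_triangle_ineq4)
  finally show ?thesis using x by simp
qed

lemma norm2lt: "x = a - b \<Longrightarrow> norm a < e/2 \<Longrightarrow> norm b < e/2 \<Longrightarrow> norm (x::'a::real_normed_vector) < e"
proof -
  assume "x = a - b" "norm a < e/2" "norm b < e/2"
  moreover have "norm (a - b) \<le> norm a + norm b" by (rule norm_triangle_ineq4)
  ultimately show ?thesis by simp
qed

lemma norm3p: "x = a + b - c \<Longrightarrow> norm x \<le> norm a + norm b + norm (c::'a::real_normed_vector)"
proof -
  assume x: "x = a + b - c"
  have "norm (a + b - c) \<le> norm (a + b) + norm c" by (rule norm_triangle_ineq4)
  also have "norm (a + b) \<le> norm a + norm b" by (rule norm_triangle_ineq)
  finally show ?thesis using x by simp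
qed

lemma norm3q: "x = a - b + c \<Longrightarrow> norm x \<le> norm a + norm b + norm (c::'a::real_normed_vector)"
proof -
  assume x: "x = a - b + c"
  have "norm (a - b + c) \<le> norm (a - b) + norm c" by (rule norm_triangle_ineq)
  also have "norm (a - b) \<le> norm a + norm b" by (rule norm_triangle_ineq4)
  finally show ?thesis using x by simp
qed

lemma sum_mv: "(\<Sum>i\<in>S. f i) *v (w::real^'n::finite) = (\<Sum>i\<in>S. (f i :: 'n mat) *v w)"
  by (induction S rule: infinite_finite_induct) (auto simp: matrix_vector_mult_add_rdistrib)


lemma fine_division_exists2:
  assumes "gauge g1" "gauge g2"
  obtains D where "D tagged_division_of {a..b::real}" "g1 fine D" "g2 fine D"
proof -
  obtain D where "D tagged_division_of {a..b}" "(\<lambda>x. g1 x \<inter> g2 x) fine D"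
    using fine_division_exists_real[OF gauge_Int[OF assms]] by blast
  then show ?thesis using that fine_Int by blast
qed

lemma ksv_from_ks:
  fixes A :: "real \<Rightarrow> 'n::finite mat"
  assumes "ks_has_integral A F I a b"
  shows "ksv A (\<lambda>t. F t *v w) (I *v w) a b"
  unfolding ksv_def
proof (intro conjI allI impI)
  show "a \<le> b" using assms unfolding ks_has_integral_def by simp
  fix e :: real assume e: "e > 0"
  define C where "C = real CARD('n) * real CARD('n) * (norm w + 1)"
  have "real CARD('n) > 0" by simp
  then have C: "C > 0" unfolding C_def by (intro mult_pos_pos) (auto intro: add_nonneg_pos)
  obtain \<gamma> where g: "gauge \<gamma>" and h: "\<And>D. D tagged_division_of {a..b} \<and> \<gamma> fine D \<Longrightarrow>
      norm ((\<Sum>(\<tau>,K)\<in>D. (A (Sup K) - A (Inf K)) ** F \<tau>) - I) < e / C"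
    using assms e C unfolding ks_has_integral_def by (meson divide_pos_pos)
  show "\<exists>\<gamma>. gauge \<gamma> \<and> (\<forall>D. D tagged_division_of {a..b} \<and> \<gamma> fine D \<longrightarrow> norm (RS A (\<lambda>t. F t *v w) D - I *v w) < e)"
  proof (intro exI conjI allI impI)
    show "gauge \<gamma>" by fact
    fix D assume D: "D tagged_division_of {a..b} \<and> \<gamma> fine D"
    define X where "X = (\<Sum>(\<tau>,K)\<in>D. (A (Sup K) - A (Inf K)) ** F \<tau>)"
    have "RS A (\<lambda>t. F t *v w) D = X *v w"
      unfolding RS_def X_def sum_mv by (simp add: case_prod_unfold matrix_vector_mul_assoc)
    then have "norm (RS A (\<lambda>t. F t *v w) D - I *v w) = norm ((X - I) *v w)"
      by (simp add: matrix_vector_mult_diff_rdistrib)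
    also have "\<dots> \<le> opnorm (X - I) * norm w" by (rule opnorm_mv)
    also have "\<dots> \<le> (real CARD('n) * real CARD('n) * norm (X - I)) * norm w"
      by (rule mult_right_mono[OF opnorm_le_norm]) simp
    also have "\<dots> \<le> norm (X - I) * C"
      unfolding C_def by (simp add: mult_left_mono algebra_simps)
    also have "\<dots> < e / C * C" using h[OF D] C unfolding X_def by (intro mult_strict_right_mono) auto
    also have "\<dots> = e" using C by simp
    finally show "norm (RS A (\<lambda>t. F t *v w) D - I *v w) < e" .
  qed
qed

lemma RS_diff: "RS A (\<lambda>t. f t - g t) D = RS A f D - RS A g D"
  unfolding RS_def by (simp add: case_prod_unfold matrix_vector_mult_diff_distrib sum_subtractf)

lemma ksv_diff:
  assumes "ksv A f I a b" "ksv A g J a b"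
  shows "ksv A (\<lambda>t. f t - g t) (I - J) a b"
  unfolding ksv_def
proof (intro conjI allI impI)
  show "a \<le> b" using assms unfolding ksv_def by simp
  fix e :: real assume e: "e > 0"
  obtain \<gamma>1 where g1: "gauge \<gamma>1" "\<And>D. D tagged_division_of {a..b} \<Longrightarrow> \<gamma>1 fine D \<Longrightarrow> norm (RS A f D - I) < e/2"
    using ksvD[OF assms(1)] e by (metis half_gt_zero)
  obtain \<gamma>2 where g2: "gauge \<gamma>2" "\<And>D. D tagged_division_of {a..b} \<Longrightarrow> \<gamma>2 fine D \<Longrightarrow> norm (RS A g D - J) < e/2"
    using ksvD[OF assms(2)] e by (metis half_gt_zero)
  show "\<exists>\<gamma>. gauge \<gamma> \<and> (\<forall>D. D tagged_division_of {a..b} \<and> \<gamma> fine D \<longrightarrow> norm (RS A (\<lambda>t. f t - g t) D - (I - J)) < e)"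
  proof (intro exI conjI allI impI)
    show "gauge (\<lambda>x. \<gamma>1 x \<inter> \<gamma>2 x)" by (rule gauge_Int[OF g1(1) g2(1)])
    fix D assume D: "D tagged_division_of {a..b} \<and> (\<lambda>x. \<gamma>1 x \<inter> \<gamma>2 x) fine D"
    have Dt: "D tagged_division_of {a..b}" using D by (rule conjunct1)
    have Df: "\<gamma>1 fine D \<and> \<gamma>2 fine D" using D[THEN conjunct2] by (simp only: fine_Int)
    have "norm (RS A f D - I) < e/2" by (rule g1(2)[OF Dt Df[THEN conjunct1]])
    moreover have "norm (RS A g D - J) < e/2" by (rule g2(2)[OF Dt Df[THEN conjunct2]])
    moreover have "RS A (\<lambda>t. f t - g t) D - (I - J) = (RS A f D - I) - (RS A g D - J)"
      by (simp add: RS_diff)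
    ultimately show "norm (RS A (\<lambda>t. f t - g t) D - (I - J)) < e"
      by (metis norm2lt)
  qed
qed

lemma ksv_cauchy:
  fixes A :: "real \<Rightarrow> 'n::finite mat"
  assumes ab: "a \<le> b"
    and C: "\<And>e. e > 0 \<Longrightarrow> \<exists>\<gamma>. gauge \<gamma> \<and> (\<forall>D1 D2. D1 tagged_division_of {a..b} \<and> \<gamma> fine D1 \<and>
          D2 tagged_division_of {a..b} \<and> \<gamma> fine D2 \<longrightarrow> norm (RS A y D1 - RS A y D2) < e)"
  shows "\<exists>I. ksv A y I a b"
proof -
  have "\<forall>n::nat. \<exists>\<gamma>. gauge \<gamma> \<and> (\<forall>D1 D2. D1 tagged_division_of {a..b} \<and> \<gamma> fine D1 \<and>
          D2 tagged_division_of {a..b} \<and> \<gamma> fine D2 \<longrightarrow> norm (RS A y D1 - RS A y D2) < 1 / (real n + 1))"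
    using C by simp
  then obtain g where g: "\<And>n. gauge (g n)"
    and gC: "\<And>n D1 D2. D1 tagged_division_of {a..b} \<Longrightarrow> g n fine D1 \<Longrightarrow>
          D2 tagged_division_of {a..b} \<Longrightarrow> g n fine D2 \<Longrightarrow> norm (RS A y D1 - RS A y D2) < 1 / (real n + 1)"
    by metis
  define G where "G n = (\<lambda>x. \<Inter>{g k x | k. k \<in> {..n}})" for n
  have G: "gauge (G n)" for n unfolding G_def by (rule gauge_Inter) (auto simp: g)
  have Gf: "g k fine D" if "G n fine D" "k \<le> n" for n k D
    using that unfolding G_def fine_Inter by auto
  have "\<forall>n. \<exists>D. D tagged_division_of {a..b} \<and> G n fine D"
    using fine_division_exists_real[OF G] by metis
  then obtain Dn where Dn: "\<And>n. Dn n tagged_division_of {a..b}" "\<And>n. G n fine Dn n" by metis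
  define s where "s n = RS A y (Dn n)" for n
  have sC: "norm (s m - s n) < 1 / (real N + 1)" if "m \<ge> N" "n \<ge> N" for m n N
    unfolding s_def using gC[OF Dn(1) Gf[OF Dn(2)] Dn(1) Gf[OF Dn(2)]] that by blast
  have "Cauchy s"
  proof (rule CauchyI)
    fix e :: real assume "e > 0"
    then obtain N :: nat where "1 / (real N + 1) < e"
      by (metis nat_approx_posE of_nat_Suc add.commute)
    then show "\<exists>M. \<forall>m\<ge>M. \<forall>n\<ge>M. norm (s m - s n) < e" using sC by (meson order_less_trans)
  qed
  then obtain I where I: "s \<longlonglongrightarrow> I" using Cauchy_convergent_iff convergent_def by blast
  show ?thesis
  proof (rule exI[of _ I], unfold ksv_def, intro conjI allI impI)
    show "a \<le> b" by fact
    fix e :: real assume e: "e > 0"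
    then obtain N :: nat where N: "1 / (real N + 1) < e / 2"
      by (metis half_gt_zero nat_approx_posE of_nat_Suc add.commute)
    obtain N' where N': "\<And>n. n \<ge> N' \<Longrightarrow> norm (s n - I) < e / 2"
      using I e unfolding LIMSEQ_iff by (metis half_gt_zero)
    show "\<exists>\<gamma>. gauge \<gamma> \<and> (\<forall>D. D tagged_division_of {a..b} \<and> \<gamma> fine D \<longrightarrow> norm (RS A y D - I) < e)"
    proof (intro exI conjI allI impI)
      show "gauge (g N)" by (rule g)
      fix D assume D: "D tagged_division_of {a..b} \<and> g N fine D"
      define n where "n = max N N'"
      have 1: "norm (RS A y D - s n) < e / 2"
        using gC[of D N "Dn n"] D Dn(1) Gf[OF Dn(2), of N n] N unfolding s_def n_def by force
      have 2: "norm (s n - I) < e / 2" using N' n_def by simp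
      have "norm (RS A y D - I) \<le> norm (RS A y D - s n) + norm (s n - I)"
        by (rule norm_diff_triangle_le[of _ "s n"]) simp_all
      then show "norm (RS A y D - I) < e" using 1 2 by linarith
    qed
  qed
qed

lemma ksv_split:
  fixes A :: "real \<Rightarrow> 'n::finite mat"
  assumes I1: "ksv A y I1 a c" and I2: "ksv A y I2 a b" and "c \<le> b"
  shows "ksv A y (I2 - I1) c b"
proof -
  have ac: "a \<le> c" using I1 unfolding ksv_def by simp
  have "\<exists>J. ksv A y J c b"
  proof (rule ksv_cauchy[OF \<open>c \<le> b\<close>])
    fix e :: real assume e: "e > 0"
    obtain \<gamma> where g: "gauge \<gamma>" "\<And>D. D tagged_division_of {a..b} \<Longrightarrow> \<gamma> fine D \<Longrightarrow> norm (RS A y D - I2) < e/2"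
      using ksvD[OF I2] e by (metis half_gt_zero)
    obtain D0 where D0: "D0 tagged_division_of {a..c}" "\<gamma> fine D0"
      using fine_division_exists_real[OF g(1)] by blast
    show "\<exists>\<gamma>. gauge \<gamma> \<and> (\<forall>D1 D2. D1 tagged_division_of {c..b} \<and> \<gamma> fine D1 \<and>
          D2 tagged_division_of {c..b} \<and> \<gamma> fine D2 \<longrightarrow> norm (RS A y D1 - RS A y D2) < e)"
    proof (intro exI conjI allI impI)
      show "gauge \<gamma>" by fact
      fix D1 D2 assume D: "D1 tagged_division_of {c..b} \<and> \<gamma> fine D1 \<and> D2 tagged_division_of {c..b} \<and> \<gamma> fine D2"
      have E: "norm (RS A y D0 + RS A y D' - I2) < e/2"
        if "D' tagged_division_of {c..b}" "\<gamma> fine D'" for D'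
      proof -
        have "(D0 \<union> D') tagged_division_of {a..b}" "RS A y (D0 \<union> D') = RS A y D0 + RS A y D'"
          using RS_Un[OF D0(1) that(1) ac \<open>c \<le> b\<close>] by auto
        moreover have "\<gamma> fine (D0 \<union> D')" using D0(2) that(2) by (rule fine_Un)
        ultimately show ?thesis using g(2) by metis
      qed
      have "norm (RS A y D0 + RS A y D1 - I2) < e/2" using E D by blast
      moreover have "norm (RS A y D0 + RS A y D2 - I2) < e/2" using E D by blast
      moreover have "RS A y D1 - RS A y D2 = (RS A y D0 + RS A y D1 - I2) - (RS A y D0 + RS A y D2 - I2)"
        by simp
      ultimately show "norm (RS A y D1 - RS A y D2) < e"
        by (metis norm2lt)
    qed
  qed
  then obtain J where J: "ksv A y J c b" by blast
  have "J = I2 - I1"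
  proof (rule ccontr)
    assume ne: "J \<noteq> I2 - I1"
    define e where "e = norm (J - (I2 - I1)) / 3"
    have e: "e > 0" using ne unfolding e_def by simp
    obtain g1 where g1: "gauge g1" "\<And>D. D tagged_division_of {a..c} \<Longrightarrow> g1 fine D \<Longrightarrow> norm (RS A y D - I1) < e"
      using ksvD[OF I1 e] by blast
    obtain g2 where g2: "gauge g2" "\<And>D. D tagged_division_of {a..b} \<Longrightarrow> g2 fine D \<Longrightarrow> norm (RS A y D - I2) < e"
      using ksvD[OF I2 e] by blast
    obtain g3 where g3: "gauge g3" "\<And>D. D tagged_division_of {c..b} \<Longrightarrow> g3 fine D \<Longrightarrow> norm (RS A y D - J) < e"
      using ksvD[OF J e] by blast
    obtain DL where DL: "DL tagged_division_of {a..c}" "g1 fine DL" "g2 fine DL"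
      using fine_division_exists2[OF g1(1) g2(1)] by blast
    obtain DR where DR: "DR tagged_division_of {c..b}" "g3 fine DR" "g2 fine DR"
      using fine_division_exists2[OF g3(1) g2(1)] by blast
    have 1: "norm (RS A y DL - I1) < e" using g1 DL by blast
    have 3: "norm (RS A y DR - J) < e" using g3 DR by blast
    have "(DL \<union> DR) tagged_division_of {a..b}" "RS A y (DL \<union> DR) = RS A y DL + RS A y DR"
      using RS_Un[OF DL(1) DR(1) ac \<open>c \<le> b\<close>] by auto
    moreover have "g2 fine (DL \<union> DR)" using DL(3) DR(3) by (rule fine_Un)
    ultimately have 2: "norm (RS A y DL + RS A y DR - I2) < e" using g2(2) by metis
    have "J - (I2 - I1) = (RS A y DL + RS A y DR - I2) - (RS A y DL - I1) - (RS A y DR - J)"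
      by (simp add: algebra_simps)
    then have "norm (J - (I2 - I1)) \<le> norm (RS A y DL + RS A y DR - I2) + norm (RS A y DL - I1) + norm (RS A y DR - J)"
      using norm3 by metis
    then have "norm (J - (I2 - I1)) < 3 * e" using 1 2 3 by linarith
    then show False unfolding e_def by simp
  qed
  then show ?thesis using J by simp
qed


lemma RS_zero:
  assumes D: "D tagged_division_of {a..b}" and z: "\<And>t. a \<le> t \<Longrightarrow> t \<le> b \<Longrightarrow> y t = 0"
  shows "RS A y D = 0"
  unfolding RS_def
proof (rule sum.neutral, safe)
  fix \<tau> K assume "(\<tau>,K) \<in> D"
  then obtain u v where "K = {u..v}" "u \<le> \<tau>" "\<tau> \<le> v" "a \<le> u" "v \<le> b"
    using tagged_piece_interval[OF D] by blast
  then show "(A (Sup K) - A (Inf K)) *v y \<tau> = 0" using z by simp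
qed

lemma local_est:
  fixes A :: "real \<Rightarrow> 'n::finite mat"
  assumes H2: "\<And>c t. r \<le> c \<Longrightarrow> c \<le> t \<Longrightarrow> ksv A y (y t - y c) c t" and rb: "r \<le> b" and e: "e > 0"
  obtains \<gamma> where "gauge \<gamma>"
    "\<And>u v \<tau>. r \<le> u \<Longrightarrow> u \<le> \<tau> \<Longrightarrow> \<tau> \<le> v \<Longrightarrow> v \<le> b \<Longrightarrow> {u..v} \<subseteq> \<gamma> \<tau> \<Longrightarrow>
        norm ((A v - A u) *v y \<tau> - (y v - y u)) \<le> e"
proof -
  obtain \<gamma> where g: "gauge \<gamma>" "\<And>D. D tagged_division_of {r..b} \<Longrightarrow> \<gamma> fine D \<Longrightarrow> norm (RS A y D - (y b - y r)) < e"
    using ksvD[OF H2[OF order_refl rb] e] by blast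
  have est: "norm ((A v - A u) *v y \<tau> - (y v - y u)) \<le> e"
    if uv: "r \<le> u" "u \<le> \<tau>" "\<tau> \<le> v" "v \<le> b" "{u..v} \<subseteq> \<gamma> \<tau>" for u v \<tau>
  proof (rule field_le_epsilon)
    fix \<eta> :: real assume "\<eta> > 0"
    then have \<eta>: "\<eta>/2 > 0" by simp
    obtain g1 where g1: "gauge g1" "\<And>D. D tagged_division_of {r..u} \<Longrightarrow> g1 fine D \<Longrightarrow> norm (RS A y D - (y u - y r)) < \<eta>/2"
      using ksvD[OF H2[OF order_refl uv(1)] \<eta>] by blast
    obtain g3 where g3: "gauge g3" "\<And>D. D tagged_division_of {v..b} \<Longrightarrow> g3 fine D \<Longrightarrow> norm (RS A y D - (y b - y v)) < \<eta>/2"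
    proof -
      have rv: "r \<le> v" using uv by linarith
      show ?thesis by (rule ksvD[OF H2[OF rv uv(4)] \<eta>]) (rule that; assumption)+
    qed
    obtain DL where DL: "DL tagged_division_of {r..u}" "\<gamma> fine DL" "g1 fine DL"
      using fine_division_exists2[OF g(1) g1(1)] by blast
    obtain DR where DR: "DR tagged_division_of {v..b}" "\<gamma> fine DR" "g3 fine DR"
      using fine_division_exists2[OF g(1) g3(1)] by blast
    define P where "P = {(\<tau>, {u..v})}"
    have P: "P tagged_division_of {u..v}" unfolding P_def
      by (rule tagged_division_of_self_real) (use uv in auto)
    have Pf: "\<gamma> fine P" unfolding P_def fine_def using uv(5) by auto
    have RSP: "RS A y P = (A v - A u) *v y \<tau>" unfolding P_def RS_single using uv by simp
    have uv': "u \<le> v" using uv by simp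
    have T1: "(DL \<union> P) tagged_division_of {r..v}" "RS A y (DL \<union> P) = RS A y DL + RS A y P"
      using RS_Un[OF DL(1) P uv(1) uv'] by auto
    have rv: "r \<le> v" using uv by simp
    have T2: "(DL \<union> P \<union> DR) tagged_division_of {r..b}" "RS A y (DL \<union> P \<union> DR) = RS A y (DL \<union> P) + RS A y DR"
      using RS_Un[OF T1(1) DR(1) rv uv(4)] by auto
    have "\<gamma> fine (DL \<union> P \<union> DR)" using DL DR Pf by (intro fine_Un)
    then have 1: "norm (RS A y DL + RS A y P + RS A y DR - (y b - y r)) < e"
      using g(2)[OF T2(1)] T2(2) T1(2) by simp
    have 2: "norm (RS A y DL - (y u - y r)) < \<eta>/2" using g1(2) DL by blast
    have 3: "norm (RS A y DR - (y b - y v)) < \<eta>/2" using g3(2) DR by blast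
    have "(A v - A u) *v y \<tau> - (y v - y u) = (RS A y DL + RS A y P + RS A y DR - (y b - y r))
       - (RS A y DL - (y u - y r)) - (RS A y DR - (y b - y v))" using RSP by (simp add: algebra_simps)
    then have "norm ((A v - A u) *v y \<tau> - (y v - y u)) \<le> norm (RS A y DL + RS A y P + RS A y DR - (y b - y r))
       + norm (RS A y DL - (y u - y r)) + norm (RS A y DR - (y b - y v))"
      using norm3 by metis
    then show "norm ((A v - A u) *v y \<tau> - (y v - y u)) \<le> e + \<eta>" using 1 2 3 by linarith
  qed
  show ?thesis by (rule that[OF g(1) est])
qed

lemma bounded_sol:
  fixes A :: "real \<Rightarrow> 'n::finite mat"
  assumes bv: "locally_bv_J A" and r: "0 \<le> r"
    and H2: "\<And>c t. r \<le> c \<Longrightarrow> c \<le> t \<Longrightarrow> ksv A y (y t - y c) c t" and rb: "r \<le> b"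
  shows "\<exists>B. \<forall>t. r \<le> t \<longrightarrow> t \<le> b \<longrightarrow> norm (y t) \<le> B"
proof -
  obtain \<gamma> where g: "gauge \<gamma>"
    "\<And>u v \<tau>. r \<le> u \<Longrightarrow> u \<le> \<tau> \<Longrightarrow> \<tau> \<le> v \<Longrightarrow> v \<le> b \<Longrightarrow> {u..v} \<subseteq> \<gamma> \<tau> \<Longrightarrow>
        norm ((A v - A u) *v y \<tau> - (y v - y u)) \<le> 1"
    using local_est[OF H2 rb, of 1] by auto
  obtain D where D: "D tagged_division_of {r..b}" "\<gamma> fine D" using fine_division_exists_real[OF g(1)] by blast
  define V where "V = W A b - W A r"
  have V: "V \<ge> 0" unfolding V_def using W_mono[OF bv r rb] by simp
  define f where "f = (\<lambda>(\<tau>::real, K::real set). norm (y \<tau>) * (1 + V) + 1)"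
  have f0: "f p \<ge> 0" for p unfolding f_def using V by (auto simp: case_prod_unfold)
  have "norm (y t) \<le> sum f D" if t: "r \<le> t" "t \<le> b" for t
  proof -
    have "t \<in> \<Union>{K. \<exists>x. (x,K) \<in> D}" using tagged_division_ofD(6)[OF D(1)] t by auto
    then obtain \<tau> K where tk: "(\<tau>,K) \<in> D" "t \<in> K" by blast
    obtain u v where uv: "K = {u..v}" "u \<le> \<tau>" "\<tau> \<le> v" "r \<le> u" "v \<le> b"
      using tagged_piece_interval[OF D(1) tk(1)] by blast
    have Kg: "K \<subseteq> \<gamma> \<tau>" using D(2) tk(1) unfolding fine_def by blast
    have "norm (y t) \<le> f (\<tau>, K)"
    proof (cases "\<tau> \<le> t")
      case True
      have "{\<tau>..t} \<subseteq> \<gamma> \<tau>" using Kg uv tk(2) by auto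
      then have 1: "norm ((A t - A \<tau>) *v y \<tau> - (y t - y \<tau>)) \<le> 1"
        using g(2)[of \<tau> \<tau> t] uv tk(2) True by auto
      have "opnorm (A t - A \<tau>) \<le> V"
        using W_mono_diff[OF bv _ True] W_mono[OF bv, of r \<tau>] W_mono[OF bv, of t b] uv tk r t
        unfolding V_def by auto
      then have 2: "norm ((A t - A \<tau>) *v y \<tau>) \<le> V * norm (y \<tau>)"
        by (meson mult_right_mono norm_ge_zero opnorm_mv order_trans)
      have "y t = y \<tau> + (A t - A \<tau>) *v y \<tau> - ((A t - A \<tau>) *v y \<tau> - (y t - y \<tau>))" by simp
      then have "norm (y t) \<le> norm (y \<tau>) + norm ((A t - A \<tau>) *v y \<tau>) + norm ((A t - A \<tau>) *v y \<tau> - (y t - y \<tau>))"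
        by (rule norm3p)
      then show ?thesis using 1 2 unfolding f_def by (simp add: algebra_simps)
    next
      case False
      have "{t..\<tau>} \<subseteq> \<gamma> \<tau>" using Kg uv tk(2) by auto
      then have 1: "norm ((A \<tau> - A t) *v y \<tau> - (y \<tau> - y t)) \<le> 1"
        using g(2)[of t \<tau> \<tau>] uv tk(2) False t by auto
      have "opnorm (A \<tau> - A t) \<le> V"
        using W_mono_diff[OF bv _, of t \<tau>] W_mono[OF bv, of r t] W_mono[OF bv, of \<tau> b] uv tk r t False
        unfolding V_def by auto
      then have 2: "norm ((A \<tau> - A t) *v y \<tau>) \<le> V * norm (y \<tau>)"
        by (meson mult_right_mono norm_ge_zero opnorm_mv order_trans)
      have "y t = y \<tau> - (A \<tau> - A t) *v y \<tau> + ((A \<tau> - A t) *v y \<tau> - (y \<tau> - y t))" by simp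
      then have "norm (y t) \<le> norm (y \<tau>) + norm ((A \<tau> - A t) *v y \<tau>) + norm ((A \<tau> - A t) *v y \<tau> - (y \<tau> - y t))"
        by (rule norm3q)
      then show ?thesis using 1 2 unfolding f_def by (simp add: algebra_simps)
    qed
    also have "\<dots> \<le> sum f D"
      by (rule member_le_sum) (use tk D f0 in auto)
    finally show ?thesis .
  qed
  then show ?thesis by blast
qed

lemma left_limit:
  fixes A :: "real \<Rightarrow> 'n::finite mat"
  assumes bv: "locally_bv_J A" and t: "t > 0"
  shows "\<exists>L. (A \<longlongrightarrow> L) (at_left t)"
proof -
  define C where "C = real CARD('n) * real CARD('n)"
  have C: "C > 0" unfolding C_def by simp
  define w where "w = Sup (W A ` {0..<t})"
  have bdd: "bdd_above (W A ` {0..<t})"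
    by (rule bdd_aboveI[of _ "W A t"]) (use W_mono[OF bv] in auto)
  have "cauchy_filter (filtermap A (at_left t))"
    unfolding cauchy_filter_metric_filtermap
  proof (intro allI impI)
    fix e :: real assume e: "e > 0"
    have "w - e / C < w" using e C by simp
    moreover have "W A ` {0..<t} \<noteq> {}" using t by auto
    ultimately obtain z where "z \<in> W A ` {0..<t}" "w - e / C < z"
      unfolding w_def by (rule less_cSupE)
    then obtain u0 where u0: "u0 \<in> {0..<t}" "w - e / C < W A u0" by blast
    have key: "dist (A x) (A y) < e" if "u0 < x" "x \<le> y" "y < t" for x y
    proof -
      have "W A y \<le> w" unfolding w_def by (rule cSup_upper) (use that u0 bdd in auto)
      have "dist (A x) (A y) = norm (A y - A x)" by (simp add: dist_norm norm_minus_commute)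
      also have "\<dots> \<le> C * opnorm (A y - A x)" unfolding C_def by (rule norm_le_opnorm)
      also have "\<dots> \<le> C * (W A y - W A u0)"
        using W_mono_diff[OF bv _ that(2)] W_mono[OF bv, of u0 x] u0 that C by auto
      also have "\<dots> < C * (e / C)"
        using \<open>W A y \<le> w\<close> u0 C by (intro mult_strict_left_mono) auto
      also have "\<dots> = e" using C by simp
      finally show ?thesis .
    qed
    show "\<exists>P. eventually P (at_left t) \<and> (\<forall>x y. P x \<and> P y \<longrightarrow> dist (A x) (A y) < e)"
    proof (intro exI conjI allI impI)
      show "eventually (\<lambda>x. x \<in> {u0<..<t}) (at_left t)" using u0 by (intro eventually_at_left_real) auto
      fix x y assume "x \<in> {u0<..<t} \<and> y \<in> {u0<..<t}"
      then show "dist (A x) (A y) < e"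
        using key[of x y] key[of y x] by (cases "x \<le> y") (auto simp: dist_commute)
    qed
  qed
  then have "\<exists>c. filtermap A (at_left t) \<le> nhds c"
    by (rule cauchy_filter_complete_converges[OF _ complete_UNIV]) (simp_all add: filtermap_bot_iff)
  then obtain L where "filtermap A (at_left t) \<le> nhds L" by (elim exE)
  then have "(A \<longlongrightarrow> L) (at_left t)" unfolding filterlim_def .
  then show ?thesis by (rule exI)
qed


lemma bl_mv: "bounded_linear (\<lambda>M::'n::finite mat. M *v v)"
proof (rule bounded_linear_intro[where K="real CARD('n) * real CARD('n) * norm v"])
  fix M N :: "'n mat" and c :: real
  show "(M + N) *v v = M *v v + N *v v" by (rule matrix_vector_mult_add_rdistrib)
  show "(c *\<^sub>R M) *v v = c *\<^sub>R (M *v v)"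
    by (simp add: vec_eq_iff matrix_vector_mult_def sum_distrib_left mult.assoc)
  have "norm (M *v v) \<le> opnorm M * norm v" by (rule opnorm_mv)
  also have "\<dots> \<le> (real CARD('n) * real CARD('n) * norm M) * norm v"
    by (rule mult_right_mono[OF opnorm_le_norm]) simp
  finally show "norm (M *v v) \<le> norm M * (real CARD('n) * real CARD('n) * norm v)"
    by (simp add: algebra_simps)
qed

lemma invertible_kernel:
  fixes M :: "'n::finite mat"
  assumes "invertible M" "M *v x = 0" shows "x = 0"
  using inj_matrix_vector_mult[OF assms(1)] assms(2) by (metis injD matrix_vector_mult_0_right)

lemma uniqueness:
  fixes A :: "real \<Rightarrow> 'n::finite mat"
  assumes bv: "locally_bv_J A" and invm: "\<And>t. t > 0 \<Longrightarrow> invertible (mat 1 - jump_minus A t)"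
    and r: "0 \<le> r" and y0: "y r = 0" and H: "\<And>t. r \<le> t \<Longrightarrow> ksv A y (y t) r t"
    and t1: "r \<le> t1"
  shows "y t1 = 0"
proof (rule ccontr)
  assume yt1: "y t1 \<noteq> 0"
  have H2: "ksv A y (y t - y c) c t" if "r \<le> c" "c \<le> t" for c t
    using ksv_split[OF H[OF that(1)] H[of t] that(2)] that by simp
  define S where "S = {t. r \<le> t \<and> t \<le> t1 \<and> (\<forall>u. r \<le> u \<and> u \<le> t \<longrightarrow> y u = 0)}"
  have rS: "r \<in> S" unfolding S_def using t1 y0 by auto
  have bdd: "bdd_above S" unfolding S_def by (rule bdd_aboveI[of _ t1]) auto
  define ts where "ts = Sup S"
  have rts: "r \<le> ts" unfolding ts_def by (rule cSup_upper[OF rS bdd])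
  have Sne: "S \<noteq> {}" using rS by blast
  have tst1: "ts \<le> t1" unfolding ts_def by (rule cSup_least[OF Sne]) (simp add: S_def)
  have Z: "y u = 0" if "r \<le> u" "u < ts" for u
  proof -
    have "u < Sup S" using that unfolding ts_def by simp
    then obtain s where "s \<in> S" "u < s" using Sne by (rule less_cSupE)
    then show ?thesis unfolding S_def using that by auto
  qed
  have yts: "y ts = 0"
  proof (cases "ts = r")
    case True then show ?thesis using y0 by simp
  next
    case False
    then have ts0: "ts > 0" "r < ts" using rts r by auto
    obtain L where L: "(A \<longlongrightarrow> L) (at_left ts)" using left_limit[OF bv ts0(1)] by blast
    have jm: "jump_minus A ts = A ts - L"
      unfolding jump_minus_def using tendsto_Lim[OF trivial_limit_at_left_real L] by simp
    have small: "norm ((A ts - L) *v y ts - y ts) \<le> e" if e: "e > 0" for e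
    proof -
      obtain \<gamma> where g: "gauge \<gamma>"
        "\<And>u v \<tau>. r \<le> u \<Longrightarrow> u \<le> \<tau> \<Longrightarrow> \<tau> \<le> v \<Longrightarrow> v \<le> ts \<Longrightarrow> {u..v} \<subseteq> \<gamma> \<tau> \<Longrightarrow>
            norm ((A v - A u) *v y \<tau> - (y v - y u)) \<le> e"
        using local_est[OF H2 rts e] by blast
      obtain d where d: "d > 0" "ball ts d \<subseteq> \<gamma> ts"
        using g(1) unfolding gauge_def by (meson open_contains_ball)
      have ev: "eventually (\<lambda>u. u \<in> {max r (ts - d)<..<ts}) (at_left ts)"
        using d ts0 by (intro eventually_at_left_real) auto
      have "eventually (\<lambda>u. norm ((A ts - A u) *v y ts - y ts) \<le> e) (at_left ts)"
      proof (rule eventually_mono[OF ev])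
        fix u assume u: "u \<in> {max r (ts - d)<..<ts}"
        have "{u..ts} \<subseteq> \<gamma> ts" using d u by (auto simp: dist_real_def)
        then have "norm ((A ts - A u) *v y ts - (y ts - y u)) \<le> e" using g(2)[of u ts ts] u by auto
        moreover have "y u = 0" using Z u by auto
        ultimately show "norm ((A ts - A u) *v y ts - y ts) \<le> e" by simp
      qed
      moreover have "((\<lambda>u. norm ((A ts - A u) *v y ts - y ts)) \<longlongrightarrow> norm ((A ts - L) *v y ts - y ts)) (at_left ts)"
      proof -
        have "((\<lambda>u. A ts - A u) \<longlongrightarrow> A ts - L) (at_left ts)" by (intro tendsto_diff tendsto_const L)
        then have "((\<lambda>u. (A ts - A u) *v y ts) \<longlongrightarrow> (A ts - L) *v y ts) (at_left ts)"
          by (rule bounded_linear.tendsto[OF bl_mv])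
        then have "((\<lambda>u. (A ts - A u) *v y ts - y ts) \<longlongrightarrow> (A ts - L) *v y ts - y ts) (at_left ts)"
          by (intro tendsto_diff tendsto_const)
        then show ?thesis by (rule tendsto_norm)
      qed
      ultimately show ?thesis by (intro tendsto_upperbound) auto
    qed
    have "norm ((A ts - L) *v y ts - y ts) \<le> 0"
    proof (rule field_le_epsilon)
      fix e :: real assume "e > 0" then show "norm ((A ts - L) *v y ts - y ts) \<le> 0 + e" using small by simp
    qed
    then have "norm ((A ts - L) *v y ts - y ts) = 0" using norm_ge_zero by (rule order_antisym)
    then have "(mat 1 - jump_minus A ts) *v y ts = 0"
      unfolding jm by (simp add: matrix_vector_mult_diff_rdistrib)
    then show ?thesis by (rule invertible_kernel[OF invm[OF ts0(1)]])
  qed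
  have Z2: "y u = 0" if "r \<le> u" "u \<le> ts" for u using Z yts that by (cases "u = ts") auto
  have tslt: "ts < t1" using tst1 yts yt1 by (cases "ts = t1") auto
  define m where "m = Inf (W A ` {ts<..t1})"
  have ne: "W A ` {ts<..t1} \<noteq> {}" using tslt by auto
  have bddb: "bdd_below (W A ` {ts<..t1})"
    by (rule bdd_belowI[of _ "W A ts"]) (use W_mono[OF bv] r rts in auto)
  have "m < m + 1/2" by simp
  then obtain u where u: "u \<in> {ts<..t1}" "W A u < m + 1/2"
    using cInf_lessD[OF ne, of "m + 1/2"] unfolding m_def by blast
  have Wm: "m \<le> W A v" if "v \<in> {ts<..t1}" for v unfolding m_def by (rule cInf_lower) (use that bddb in auto)
  have ru: "r \<le> u" using u rts by auto
  obtain B where B: "\<And>t. r \<le> t \<Longrightarrow> t \<le> u \<Longrightarrow> norm (y t) \<le> B"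
    using bounded_sol[OF bv r H2 ru] by blast
  have step: "norm (y s) \<le> B' / 2" if B': "\<And>t. r \<le> t \<Longrightarrow> t \<le> u \<Longrightarrow> norm (y t) \<le> B'"
    and s: "ts < s" "s \<le> u" for B' s
  proof (rule field_le_epsilon)
    fix e :: real assume e: "e > 0"
    have rs: "r \<le> s" using s rts by simp
    obtain \<gamma> where g: "gauge \<gamma>" "\<And>D. D tagged_division_of {r..s} \<Longrightarrow> \<gamma> fine D \<Longrightarrow> norm (RS A y D - y s) < e"
      using ksvD[OF H[OF rs] e] by blast
    have og: "open (\<gamma> ts)" "ts \<in> \<gamma> ts" using g(1) unfolding gauge_def by auto
    obtain d where d: "d > 0" "ball ts d \<subseteq> \<gamma> ts"
      using open_contains_ball og by blast
    define v where "v = min (ts + d/2) ((ts + s)/2)"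
    have v1: "ts < v" unfolding v_def using d(1) s(1) by simp
    have v2: "v < s" unfolding v_def using s(1) by (simp add: min_less_iff_disj)
    have "{ts..v} \<subseteq> ball ts d"
    proof
      fix x assume "x \<in> {ts..v}"
      then have "ts \<le> x" "x \<le> ts + d/2" unfolding v_def by auto
      then show "x \<in> ball ts d" using d(1) by (simp add: dist_real_def)
    qed
    then have v: "ts < v" "v < s" "{ts..v} \<subseteq> \<gamma> ts" using v1 v2 d(2) by auto
    obtain D1 where D1: "D1 tagged_division_of {r..ts}" "\<gamma> fine D1" using fine_division_exists_real[OF g(1)] by blast
    obtain D2 where D2: "D2 tagged_division_of {v..s}" "\<gamma> fine D2" using fine_division_exists_real[OF g(1)] by blast
    define P where "P = {(ts, {ts..v})}"
    have P: "P tagged_division_of {ts..v}" unfolding P_def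
      by (rule tagged_division_of_self_real) (use v in auto)
    have Pf: "\<gamma> fine P" unfolding P_def fine_def using v by auto
    have T1: "(D1 \<union> P) tagged_division_of {r..v}" "RS A y (D1 \<union> P) = RS A y D1 + RS A y P"
      using RS_Un[OF D1(1) P rts] v by auto
    have T2: "(D1 \<union> P \<union> D2) tagged_division_of {r..s}" "RS A y (D1 \<union> P \<union> D2) = RS A y (D1 \<union> P) + RS A y D2"
      using RS_Un[OF T1(1) D2(1)] v rts by auto
    have "\<gamma> fine (D1 \<union> P \<union> D2)" using D1 D2 Pf by (intro fine_Un)
    then have 1: "norm (RS A y (D1 \<union> P \<union> D2) - y s) < e" using g(2)[OF T2(1)] by blast
    have "RS A y D1 = 0" by (rule RS_zero[OF D1(1)]) (use Z2 in auto)
    moreover have "RS A y P = 0" unfolding P_def RS_single using yts by simp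
    ultimately have 2: "RS A y (D1 \<union> P \<union> D2) = RS A y D2" using T1(2) T2(2) by simp
    have "norm (RS A y D2) \<le> B' * (W A s - W A v)"
      by (rule RS_bound[OF bv _ _ D2(1)]) (use v s rts r B' in auto)
    also have "\<dots> \<le> B' * (1/2)"
    proof (rule mult_left_mono)
      show "0 \<le> B'" using B'[of r] ru by (meson norm_ge_zero order_trans order_refl)
      have "W A s \<le> W A u" using W_mono[OF bv _ s(2)] s rts r by simp
      moreover have "m \<le> W A v" using Wm[of v] v s u by auto
      ultimately show "W A s - W A v \<le> 1/2" using u by simp
    qed
    finally have "norm (RS A y D2) \<le> B' / 2" by simp
    moreover have "norm (y s) \<le> norm (RS A y D2) + norm (RS A y D2 - y s)"
      using norm_triangle_ineq4[of "RS A y D2" "RS A y D2 - y s"] by simp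
    ultimately show "norm (y s) \<le> B' / 2 + e" using 1 2 by simp
  qed
  have pw: "norm (y s) \<le> B / 2 ^ k" if "ts < s" "s \<le> u" for k s
    using that
  proof (induction k arbitrary: s)
    case 0 then show ?case using B[of s] rts by simp
  next
    case (Suc k)
    have "\<And>t. r \<le> t \<Longrightarrow> t \<le> u \<Longrightarrow> norm (y t) \<le> B / 2 ^ k"
    proof -
      fix t assume t: "r \<le> t" "t \<le> u"
      show "norm (y t) \<le> B / 2 ^ k"
      proof (cases "t \<le> ts")
        case True
        have "0 \<le> norm (y u)" by simp
        also have "norm (y u) \<le> B / 2 ^ k" using Suc.IH[of u] u by simp
        finally show ?thesis using Z2[OF t(1) True] by simp
      next
        case False then show ?thesis using Suc.IH t by simp
      qed
    qed
    from step[OF this Suc.prems] show ?case by simp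
  qed
  have yu: "y s = 0" if "ts < s" "s \<le> u" for s
  proof (rule ccontr)
    assume "y s \<noteq> 0"
    then have pos: "norm (y s) > 0" by simp
    obtain k :: nat where "B / norm (y s) < 2 ^ k" using real_arch_pow[of 2 "B / norm (y s)"] by auto
    then have "B / 2 ^ k < norm (y s)" using pos by (simp add: field_simps)
    then show False using pw[OF that, of k] by simp
  qed
  have "y w = 0" if "r \<le> w" "w \<le> u" for w
  proof (cases "w \<le> ts")
    case True then show ?thesis using Z2 that by blast
  next
    case False then show ?thesis using yu that by simp
  qed
  then have "u \<in> S" unfolding S_def using u ru by auto
  then have "u \<le> ts" unfolding ts_def by (rule cSup_upper[OF _ bdd])
  then show False using u by simp
qed

lemma opnorm_ball:
  fixes M :: "'n::finite mat"
  assumes d: "d > 0" and h: "\<And>x0. norm x0 < d \<Longrightarrow> norm (M *v x0) < c"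
  shows "opnorm M \<le> 2 * c / d"
  unfolding opnorm_def
proof (rule onorm_le)
  fix x :: "real^'n"
  show "norm (M *v x) \<le> 2 * c / d * norm x"
  proof (cases "x = 0")
    case True then show ?thesis by simp
  next
    case False
    then have nx: "norm x > 0" by simp
    define k where "k = d / (2 * norm x)"
    have k: "k > 0" unfolding k_def using d nx by simp
    have "norm (k *\<^sub>R x) = d / 2" unfolding k_def using nx d by simp
    then have "norm (M *v (k *\<^sub>R x)) < c" using h d by simp
    moreover have "M *v (k *\<^sub>R x) = k *\<^sub>R (M *v x)" by (simp add: matrix_vector_mult_scaleR)
    ultimately have "k * norm (M *v x) < c" using k by simp
    then have "norm (M *v x) < c / k" using k by (simp add: field_simps)
    also have "c / k = 2 * c / d * norm x" unfolding k_def using d nx by (simp add: field_simps)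
    finally show ?thesis by simp
  qed
qed

lemma cocycle:
  fixes A :: "real \<Rightarrow> 'n::finite mat"
  assumes bv: "locally_bv_J A" and invm: "\<And>t. t > 0 \<Longrightarrow> invertible (mat 1 - jump_minus A t)"
    and tm: "transition_matrix A U"
    and srt: "0 \<le> s" "s \<le> r" "r \<le> t"
  shows "U t s = U t r ** U r s"
proof -
  have ks: "ks_has_integral A (\<lambda>\<rho>. U \<rho> a) (U b a - mat 1) a b" if "0 \<le> a" "a \<le> b" for a b
    using tm that unfolding transition_matrix_def ks_has_integral_or_def by auto
  have "U t s *v w = (U t r ** U r s) *v w" for w
  proof -
    define z1 where "z1 = (\<lambda>\<rho>. U \<rho> s *v w)"
    define v where "v = U r s *v w"
    define z2 where "z2 = (\<lambda>\<rho>. U \<rho> r *v v)"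
    have r0: "0 \<le> r" using srt by simp
    have k1: "ksv A z1 (z1 t' - w) s t'" if "s \<le> t'" for t'
      using ksv_from_ks[OF ks[OF srt(1) that], of w] unfolding z1_def
      by (simp add: matrix_vector_mult_diff_rdistrib)
    have k2: "ksv A z2 (z2 t' - v) r t'" if "r \<le> t'" for t'
      using ksv_from_ks[OF ks[OF r0 that], of v] unfolding z2_def
      by (simp add: matrix_vector_mult_diff_rdistrib)
    have z2r: "z2 r = v" using ksv_degenerate[OF k2[OF order_refl]] by simp
    have z1r: "z1 r = v" unfolding z1_def v_def by simp
    define y where "y = (\<lambda>\<rho>. z1 \<rho> - z2 \<rho>)"
    have ky: "ksv A y (y t') r t'" if "r \<le> t'" for t'
    proof -
      have "ksv A z1 ((z1 t' - w) - (z1 r - w)) r t'"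
        by (rule ksv_split[OF k1[OF srt(2)] k1 that]) (use srt that in simp)
      from ksv_diff[OF this k2[OF that]] show ?thesis
        unfolding y_def using z1r z2r by (simp add: algebra_simps)
    qed
    have yr: "y r = 0" unfolding y_def using z1r z2r by simp
    have "y t = 0" by (rule uniqueness[where y=y, OF bv invm r0 yr ky srt(3)])
    then show ?thesis unfolding y_def z1_def z2_def v_def by (simp add: matrix_vector_mul_assoc)
  qed
  then show ?thesis by (simp add: matrix_eq)
qed

theorem theorem3p7:
  fixes A :: "real \<Rightarrow> real^'n::finite^'n" and U :: "real \<Rightarrow> real \<Rightarrow> real^'n^'n"
  assumes "locally_bv_J A"
    and "\<And>t. t > 0 \<Longrightarrow> invertible (mat 1 - jump_minus A t)"
    and "\<And>t. t \<ge> 0 \<Longrightarrow> invertible (mat 1 + jump_plus A t)"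
    and "transition_matrix A U"
  shows "uniformly_asymptotically_stable U \<longleftrightarrow>
    (\<exists>\<alpha>>0. \<exists>K>0. \<forall>s0 t. 0 \<le> s0 \<and> s0 \<le> t \<longrightarrow> opnorm (U t s0) \<le> K * exp (- \<alpha> * (t - s0)))"
proof -
  note cocyc = cocycle[OF assms(1) assms(2) assms(4)]
  show ?thesis
  proof
    assume uas: "uniformly_asymptotically_stable U"
    obtain \<delta>1 where d1: "\<delta>1 > 0" and h1: "\<And>s0 x0 t. s0 \<ge> 0 \<Longrightarrow> norm x0 < \<delta>1 \<Longrightarrow> t \<ge> s0 \<Longrightarrow> norm (U t s0 *v x0) < 1"
      using uas unfolding uniformly_asymptotically_stable_def uniformly_stable_def
      by (metis zero_less_one)
    obtain \<delta>0 where d0: "\<delta>0 > 0" and h0: "\<And>\<epsilon>. \<epsilon> > 0 \<Longrightarrow> \<exists>T\<ge>0. \<forall>s0\<ge>0. \<forall>x0. norm x0 < \<delta>0 \<longrightarrow>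
        (\<forall>t\<ge>s0 + T. norm (U t s0 *v x0) < \<epsilon>)"
      using uas unfolding uniformly_asymptotically_stable_def by blast
    have "\<delta>0 / 4 > 0" using d0 by simp
    from h0[OF this] obtain T where T: "T \<ge> 0" and hT: "\<And>s0 x0 t. s0 \<ge> 0 \<Longrightarrow> norm x0 < \<delta>0 \<Longrightarrow> t \<ge> s0 + T \<Longrightarrow> norm (U t s0 *v x0) < \<delta>0 / 4"
      by blast
    define M where "M = 2 / \<delta>1"
    have M: "M > 0" unfolding M_def using d1 by simp
    have bM: "opnorm (U t s) \<le> M" if "0 \<le> s" "s \<le> t" for s t
      unfolding M_def using opnorm_ball[OF d1, of "U t s" 1] h1 that by simp
    define T' where "T' = T + 1"
    have T': "T' > 0" unfolding T'_def using T by simp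
    have bh: "opnorm (U t s) \<le> 1/2" if "0 \<le> s" "s + T' \<le> t" for s t
    proof -
      have "opnorm (U t s) \<le> 2 * (\<delta>0 / 4) / \<delta>0"
        by (rule opnorm_ball[OF d0]) (use hT that T'_def in auto)
      then show ?thesis using d0 by simp
    qed
    have pw: "opnorm (U (s + real k * T' + h) s) \<le> M * (1/2) ^ k" if "0 \<le> s" "0 \<le> h" for k s h
      using that
    proof (induction k arbitrary: s)
      case 0 then show ?case using bM[of s "s + h"] by simp
    next
      case (Suc k)
      have e: "s + real (Suc k) * T' + h = (s + T') + real k * T' + h" by (simp add: algebra_simps)
      have "U (s + real (Suc k) * T' + h) s = U ((s + T') + real k * T' + h) (s + T') ** U (s + T') s"
        unfolding e by (rule cocyc) (use Suc.prems T' in auto)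
      then have "opnorm (U (s + real (Suc k) * T' + h) s) \<le> opnorm (U ((s + T') + real k * T' + h) (s + T')) * opnorm (U (s + T') s)"
        by (simp add: opnorm_mult)
      also have "\<dots> \<le> (M * (1/2) ^ k) * (1/2)"
        by (rule mult_mono) (use Suc.IH[of "s + T'"] Suc.prems T' bh[of s "s + T'"] opnorm_nonneg M in auto)
      finally show ?case by simp
    qed
    define \<alpha> where "\<alpha> = ln 2 / T'"
    have \<alpha>: "\<alpha> > 0" unfolding \<alpha>_def using T' by simp
    show "\<exists>\<alpha>>0. \<exists>K>0. \<forall>s0 t. 0 \<le> s0 \<and> s0 \<le> t \<longrightarrow> opnorm (U t s0) \<le> K * exp (- \<alpha> * (t - s0))"
    proof (rule exI[of _ \<alpha>], intro conjI \<alpha> exI[of _ "2 * M"] allI impI)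
      show "2 * M > 0" using M by simp
      fix s0 t :: real assume st: "0 \<le> s0 \<and> s0 \<le> t"
      define k where "k = nat \<lfloor>(t - s0) / T'\<rfloor>"
      have q0: "(t - s0) / T' \<ge> 0" using st T' by simp
      have kle: "real k \<le> (t - s0) / T'" unfolding k_def using q0 by linarith
      have kgt: "(t - s0) / T' < real k + 1" unfolding k_def using q0 by linarith
      define h where "h = t - s0 - real k * T'"
      have h0: "h \<ge> 0" unfolding h_def using kle T' by (simp add: field_simps)
      have teq: "t = s0 + real k * T' + h" unfolding h_def by simp
      have "opnorm (U t s0) \<le> M * (1/2) ^ k" using pw[of s0 h k] st h0 teq by simp
      also have "(1/2::real) ^ k = exp (- ln 2 * real k)"
      proof -
        have "exp (- ln 2 * real k) = exp (real k * (- ln 2))" by (simp add: mult.commute)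
        also have "\<dots> = exp (- ln 2) ^ k" by (rule exp_of_nat_mult)
        also have "exp (- ln 2) = (1/2::real)" by (simp add: exp_minus)
        finally show ?thesis by simp
      qed
      also have "exp (- ln 2 * real k) \<le> exp (- \<alpha> * (t - s0) + ln 2)"
      proof -
        have "ln 2 * ((t - s0) / T') \<le> ln 2 * (real k + 1)" using kgt by (intro mult_left_mono) auto
        moreover have "\<alpha> * (t - s0) = ln 2 * ((t - s0) / T')" unfolding \<alpha>_def by simp
        ultimately show ?thesis by (simp add: algebra_simps)
      qed
      also have "exp (- \<alpha> * (t - s0) + ln 2) = 2 * exp (- \<alpha> * (t - s0))" unfolding exp_add by simp
      finally show "opnorm (U t s0) \<le> 2 * M * exp (- \<alpha> * (t - s0))" using M by simp
    qed
  next
    assume "\<exists>\<alpha>>0. \<exists>K>0. \<forall>s0 t. 0 \<le> s0 \<and> s0 \<le> t \<longrightarrow> opnorm (U t s0) \<le> K * exp (- \<alpha> * (t - s0))"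
    then obtain \<alpha> K where \<alpha>: "\<alpha> > 0" and K: "K > 0"
      and b: "\<And>s0 t. 0 \<le> s0 \<Longrightarrow> s0 \<le> t \<Longrightarrow> opnorm (U t s0) \<le> K * exp (- \<alpha> * (t - s0))" by blast
    have nb: "norm (U t s0 *v x0) \<le> K * exp (- \<alpha> * (t - s0)) * norm x0" if "0 \<le> s0" "s0 \<le> t" for s0 t x0
      using opnorm_mv[of "U t s0" x0] b[OF that] by (meson mult_right_mono norm_ge_zero order_trans)
    have us: "uniformly_stable U"
      unfolding uniformly_stable_def
    proof (intro allI impI)
      fix \<epsilon> :: real assume e: "\<epsilon> > 0"
      show "\<exists>\<delta>>0. \<forall>s0\<ge>0. \<forall>x0. norm x0 < \<delta> \<longrightarrow> (\<forall>t\<ge>s0. norm (U t s0 *v x0) < \<epsilon>)"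
      proof (intro exI[of _ "\<epsilon> / K"] conjI allI impI)
        show "\<epsilon> / K > 0" using e K by simp
        fix s0 t :: real and x0 :: "real^'n" assume s0: "s0 \<ge> 0" and x0: "norm x0 < \<epsilon> / K" and t: "t \<ge> s0"
        have "exp (- \<alpha> * (t - s0)) \<le> 1" using \<alpha> t by simp
        then have "exp (- \<alpha> * (t - s0)) * norm x0 \<le> 1 * norm x0" by (intro mult_right_mono) auto
        then have "K * (exp (- \<alpha> * (t - s0)) * norm x0) \<le> K * norm x0" using K by (intro mult_left_mono) auto
        then have "K * exp (- \<alpha> * (t - s0)) * norm x0 \<le> K * norm x0" by (simp add: mult.assoc)
        also have "\<dots> < \<epsilon>" using x0 K by (simp add: field_simps)
        finally show "norm (U t s0 *v x0) < \<epsilon>" using nb[OF s0 t, of x0] by simp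
      qed
    qed
    show "uniformly_asymptotically_stable U"
      unfolding uniformly_asymptotically_stable_def
    proof (intro conjI us, rule exI[of _ 1], intro conjI allI impI)
      show "(1::real) > 0" by simp
      fix \<epsilon> :: real assume e: "\<epsilon> > 0"
      define T where "T = max 0 (ln (K / \<epsilon>) / \<alpha>)"
      show "\<exists>T\<ge>0. \<forall>s0\<ge>0. \<forall>x0. norm x0 < 1 \<longrightarrow> (\<forall>t\<ge>s0 + T. norm (U t s0 *v x0) < \<epsilon>)"
      proof (intro exI[of _ T] conjI allI impI)
        show "T \<ge> 0" unfolding T_def by simp
        fix s0 t :: real and x0 :: "real^'n" assume s0: "s0 \<ge> 0" and x0: "norm x0 < 1" and t: "t \<ge> s0 + T"
        have "ln (K / \<epsilon>) \<le> \<alpha> * (t - s0)"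
        proof -
          have "ln (K / \<epsilon>) / \<alpha> \<le> t - s0" using t unfolding T_def by simp
          then show ?thesis using \<alpha> by (simp add: field_simps)
        qed
        then have "exp (- \<alpha> * (t - s0)) \<le> exp (- ln (K / \<epsilon>))" by simp
        also have "\<dots> = \<epsilon> / K" using K e by (simp add: exp_minus)
        finally have "K * exp (- \<alpha> * (t - s0)) \<le> \<epsilon>" using K by (simp add: field_simps)
        then have "K * exp (- \<alpha> * (t - s0)) * norm x0 \<le> \<epsilon> * norm x0" by (simp add: mult_right_mono)
        also have "\<dots> < \<epsilon>" using x0 e by simp
        finally show "norm (U t s0 *v x0) < \<epsilon>" using nb[OF s0, of t x0] t \<open>T \<ge> 0\<close> by simp
      qed
    qed
  qed
qed

end
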